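(* Let $X_1,X_2,\dots$ be i.i.d. nonnegative random variables with regularly varying tail of index $\gamma\in(0,1)$, i.e. $P(X_1>t)=L(t)t^{-\gamma}$ with $L$ slowly varying at infinity. Then for every $p\in(0,1)$ and every $\varepsilon>0$ there exists $C>0$ such that for all $n\in\mathbb N$, $$E\Big[\Big(\sum_{j=1}^n\Big(\frac{X_j}{n^{1/\gamma}}\wedge n^{-p/\gamma}\Big)\Big)^2\Big]\le Cn^{-p(\frac1\gamma-1)+\varepsilon}.$$
   Context: A function $L:\mathbb R_+\to\mathbb R_+$ is slowly varying at infinity if $L(at)/L(t)\to1$ as $t\to\infty$ for every $a>0$. *)

theory Defs
  imports "HOL-Probability.Probability"
begin

definition slowly_varying :: "(real \<Rightarrow> real) \<Rightarrow> bool" where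
  "slowly_varying L \<longleftrightarrow> (\<forall>t>0. L t > 0) \<and>
     (\<forall>a>0. ((\<lambda>t. L (a * t) / L t) \<longlongrightarrow> 1) at_top)"

end

theory Submission
  imports Defs
begin


lemma (in prob_space) min_mean_bound:
  fixes Z :: "'a \<Rightarrow> real"
  assumes Zm[measurable]: "Z \<in> borel_measurable M" and Z0: "\<And>x. x\<in>space M \<Longrightarrow> Z x \<ge> 0"
    and tl: "\<And>t. t>0 \<Longrightarrow> prob {x\<in>space M. Z x > t} \<le> K * t powr (-\<beta>)"
    and \<beta>: "0<\<beta>" "\<beta><1" and a: "a>0"
  shows "expectation (\<lambda>x. min (Z x) a) \<le> K * 2 powr \<beta> / (1 - 2 powr (\<beta>-1)) * a powr (1-\<beta>)"
proof -
  define A where "A k = {x\<in>space M. Z x > a * (1/2)^(Suc k)}" for k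
  have Am[measurable]: "A k \<in> sets M" for k unfolding A_def by measurable
  have K0: "K \<ge> 0" using tl[of 1] by (metis measure_nonneg order_trans powr_one_eq_one mult.right_neutral zero_less_one)
  define q where "q = 2 powr (\<beta>-1)"
  have q0: "0 < q" and q1: "q < 1" unfolding q_def using \<beta> by (auto intro: powr_less_one)
  define C where "C = K * 2 powr \<beta> / (1 - q) * a powr (1-\<beta>)"
  have pw: "min (Z x) a \<le> min (Z x) (a*(1/2)^N) + (\<Sum>k<N. a*(1/2)^k * indicator (A k) x)"
    if x: "x \<in> space M" for x N
  proof (induction N)
    case 0 then show ?case by simp
  next
    case (Suc N)
    have "min (Z x) (a*(1/2)^N) \<le> min (Z x) (a*(1/2)^(Suc N)) + a*(1/2)^N * indicator (A N) x"
    proof (cases "Z x > a * (1/2)^(Suc N)")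
      case True
      have p: "0 < a*(1/2)^N" using a by simp
      have "min (Z x) (a*(1/2)^N) \<le> a*(1/2)^N" by simp
      moreover have "indicator (A N) x = (1::real)" using True x by (simp add: A_def indicator_def)
      ultimately show ?thesis using p by (simp add: min_def)
    next
      case False then show ?thesis using x a by (simp add: A_def indicator_def)
    qed
    then show ?case using Suc by simp
  qed
  have int_min: "integrable M (\<lambda>x. min (Z x) a)"
    by (rule integrable_const_bound[where B=a]) (use Z0 a in auto)
  have bnd: "expectation (\<lambda>x. min (Z x) a) \<le> a*(1/2)^N + C" for N
  proof -
    have "expectation (\<lambda>x. min (Z x) a) \<le> expectation (\<lambda>x. a*(1/2)^N + (\<Sum>k<N. a*(1/2)^k * indicator (A k) x))"
    proof (rule integral_mono)
      show "integrable M (\<lambda>x. a*(1/2)^N + (\<Sum>k<N. a*(1/2)^k * indicator (A k) x))"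
        apply (rule Bochner_Integration.integrable_add, simp) apply (rule Bochner_Integration.integrable_sum, rule integrable_mult_right, rule integrable_real_indicator) by (auto simp: emeasure_eq_measure)
      fix x assume "x \<in> space M" then show "min (Z x) a \<le> a*(1/2)^N + (\<Sum>k<N. a*(1/2)^k * indicator (A k) x)"
        using pw[of x N] by linarith
    qed (rule int_min)
    also have "\<dots> = a*(1/2)^N + (\<Sum>k<N. a*(1/2)^k * prob (A k))"
    proof -
      have i1: "integrable M (\<lambda>x. a*(1/2)^k * indicator (A k) x)" for k
        by (rule integrable_mult_right, rule integrable_real_indicator) (auto simp: emeasure_eq_measure)
      have "expectation (\<lambda>x. a*(1/2)^N + (\<Sum>k<N. a*(1/2)^k * indicator (A k) x))
          = expectation (\<lambda>x. a*(1/2)^N) + expectation (\<lambda>x. \<Sum>k<N. a*(1/2)^k * indicator (A k) x)"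
        by (rule Bochner_Integration.integral_add) (simp, rule Bochner_Integration.integrable_sum, rule i1)
      also have "expectation (\<lambda>x. \<Sum>k<N. a*(1/2)^k * indicator (A k) x) = (\<Sum>k<N. expectation (\<lambda>x. a*(1/2)^k * indicator (A k) x))"
        by (rule Bochner_Integration.integral_sum) (rule i1)
      also have "\<dots> = (\<Sum>k<N. a*(1/2)^k * prob (A k))"
        by (intro sum.cong refl) (simp add: Am)
      finally show ?thesis by (simp add: prob_space)
    qed
    also have "(\<Sum>k<N. a*(1/2)^k * prob (A k)) \<le> (\<Sum>k<N. K * 2 powr \<beta> * a powr (1-\<beta>) * q^k)"
    proof (rule sum_mono)
      fix k
      have "prob (A k) \<le> K * (a * (1/2)^(Suc k)) powr (-\<beta>)"
        unfolding A_def using a by (intro tl) auto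
      also have "(a * (1/2)^(Suc k)) powr (-\<beta>) = a powr (-\<beta>) * 2 powr \<beta> * (2 powr \<beta>)^k"
        using a by (simp add: powr_mult powr_realpow[symmetric] powr_powr powr_minus_divide power_divide powr_divide mult.commute)
      finally have "prob (A k) \<le> K * (a powr (-\<beta>) * 2 powr \<beta> * (2 powr \<beta>)^k)" .
      then have "a*(1/2)^k * prob (A k) \<le> a*(1/2)^k * (K * (a powr (-\<beta>) * 2 powr \<beta> * (2 powr \<beta>)^k))"
        using a by (intro mult_left_mono) auto
      also have "\<dots> = K * 2 powr \<beta> * (a * a powr (-\<beta>)) * ((1/2)^k * (2 powr \<beta>)^k)" by (simp add: algebra_simps)
      also have "a * a powr (-\<beta>) = a powr (1-\<beta>)" using a by (simp add: powr_diff powr_minus_divide)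
      also have "(1/2)^k * (2 powr \<beta>)^k = q^k" unfolding q_def
        by (simp add: power_mult_distrib[symmetric] powr_diff)
      finally show "a*(1/2)^k * prob (A k) \<le> K * 2 powr \<beta> * a powr (1-\<beta>) * q^k" .
    qed
    also have "(\<Sum>k<N. K * 2 powr \<beta> * a powr (1-\<beta>) * q^k) = K * 2 powr \<beta> * a powr (1-\<beta>) * ((1 - q^N)/(1-q))"
      using q1 by (simp add: sum_distrib_left[symmetric] sum_gp_strict)
    also have "\<dots> \<le> C" unfolding C_def using q0 q1 K0 a
      by (auto intro!: mult_left_mono divide_right_mono simp: field_simps)
    finally show ?thesis by simp
  qed
  have "(\<lambda>N. a*(1/2)^N + C) \<longlonglongrightarrow> 0 + C"
    by (intro tendsto_add tendsto_mult_right_zero LIMSEQ_power_zero) auto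
  then have "expectation (\<lambda>x. min (Z x) a) \<le> C"
    by (intro LIMSEQ_le_const[where X="\<lambda>N. a*(1/2)^N + C"]) (use bnd in auto)
  then show ?thesis unfolding C_def q_def .
qed


lemma (in prob_space) potter_tail:
  fixes Y :: "'a \<Rightarrow> real"
  assumes Ym[measurable]: "Y \<in> borel_measurable M"
   and L: "slowly_varying L" and tl: "\<forall>t>0. prob {x\<in>space M. Y x > t} = L t * t powr (-\<gamma>)"
   and \<beta>: "0<\<beta>" "\<beta><\<gamma>"
  shows "\<exists>K. \<forall>t>0. prob {x\<in>space M. Y x > t} \<le> K * t powr (-\<beta>)"
proof -
  define F where "F t = prob {x\<in>space M. Y x > t}" for t
  have Lpos: "\<And>t. t>0 \<Longrightarrow> L t > 0" and Llim: "((\<lambda>t. L (2 * t) / L t) \<longlongrightarrow> 1) at_top"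
    using L unfolding slowly_varying_def by auto
  have r1: "1 < 2 powr (\<gamma>-\<beta>)" using \<beta> by simp
  have "eventually (\<lambda>t. L (2 * t) / L t < 2 powr (\<gamma>-\<beta>)) at_top"
    using order_tendstoD(2)[OF Llim r1] .
  then obtain t1 where t1: "\<And>t. t \<ge> t1 \<Longrightarrow> L (2 * t) / L t < 2 powr (\<gamma>-\<beta>)"
    by (auto simp: eventually_at_top_linorder)
  define t0 where "t0 = max t1 1"
  have t0: "t0 > 0" "t0 \<ge> t1" unfolding t0_def by auto
  have Fle1: "F t \<le> 1" for t unfolding F_def by simp
  have Fdbl: "F (2*t) \<le> 2 powr (-\<beta>) * F t" if t: "t \<ge> t0" for t
  proof -
    have tp: "t > 0" using t t0 by simp
    have "L (2*t) / L t < 2 powr (\<gamma>-\<beta>)" using t1[of t] t t0 by simp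
    then have "L (2*t) \<le> 2 powr (\<gamma>-\<beta>) * L t" using Lpos[OF tp] by (simp add: divide_less_eq)
    then have "L (2*t) * (2*t) powr (-\<gamma>) \<le> 2 powr (\<gamma>-\<beta>) * L t * (2*t) powr (-\<gamma>)"
      by (intro mult_right_mono) auto
    also have "\<dots> = 2 powr (\<gamma>-\<beta>) * 2 powr (-\<gamma>) * (L t * t powr (-\<gamma>))"
      using tp by (simp add: powr_mult)
    also have "2 powr (\<gamma>-\<beta>) * 2 powr (-\<gamma>) = 2 powr (-\<beta>)" by (simp add: powr_add[symmetric])
    finally show ?thesis unfolding F_def using tl tp by simp
  qed
  have small: "F t \<le> (2*t0) powr \<beta> * t powr (-\<beta>)" if "t > 0" "t < 2*t0" for t
  proof -
    have "1 \<le> (2*t0/t) powr \<beta>" using that \<beta> t0 by (intro ge_one_powr_ge_zero) auto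
    also have "\<dots> = (2*t0) powr \<beta> * t powr (-\<beta>)"
      using that t0 by (simp add: powr_divide powr_minus_divide)
    finally show ?thesis using Fle1[of t] by linarith
  qed
  have ind: "\<forall>t>0. t < 2^k * t0 \<longrightarrow> F t \<le> (2*t0) powr \<beta> * t powr (-\<beta>)" for k :: nat
  proof (induction k)
    case 0 then show ?case using small t0 by auto
  next
    case (Suc k)
    show ?case
    proof (intro allI impI)
      fix t :: real assume tp: "t > 0" and tk: "t < 2^Suc k * t0"
      show "F t \<le> (2*t0) powr \<beta> * t powr (-\<beta>)"
      proof (cases "t < 2*t0")
        case True then show ?thesis using small tp by auto
      next
        case False
        then have h: "t/2 \<ge> t0" by simp
        have h2: "t/2 < 2^k * t0" using tk by simp
        have "F t = F (2*(t/2))" by simp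
        also have "\<dots> \<le> 2 powr (-\<beta>) * F (t/2)" by (rule Fdbl[OF h])
        also have "\<dots> \<le> 2 powr (-\<beta>) * ((2*t0) powr \<beta> * (t/2) powr (-\<beta>))"
          using Suc.IH tp h2 by (intro mult_left_mono) auto
        also have "\<dots> = (2*t0) powr \<beta> * (2 powr (-\<beta>) * (t/2) powr (-\<beta>))" by simp
        also have "2 powr (-\<beta>) * (t/2) powr (-\<beta>) = t powr (-\<beta>)"
          using tp by (simp add: powr_mult[symmetric])
        finally show ?thesis .
      qed
    qed
  qed
  show ?thesis
  proof (intro exI allI impI)
    fix t :: real assume tp: "t > 0"
    obtain k :: nat where "t/t0 < 2^k" using real_arch_pow[of 2 "t/t0"] by auto
    then have "t < 2^k * t0" using t0 by (simp add: divide_less_eq)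
    then show "prob {x\<in>space M. Y x > t} \<le> (2*t0) powr \<beta> * t powr (-\<beta>)"
      using ind[of k] tp unfolding F_def by auto
  qed
qed

theorem lemmaA3:
  fixes M :: "'a measure" and X :: "nat \<Rightarrow> 'a \<Rightarrow> real" and \<gamma> :: real
  assumes "prob_space M"
    and rv: "\<And>i. X i \<in> borel_measurable M"
    and indep: "prob_space.indep_vars M (\<lambda>_. borel) X UNIV"
    and ident: "\<And>i. distr M borel (X i) = distr M borel (X 1)"
    and nonneg: "\<And>i x. x \<in> space M \<Longrightarrow> X i x \<ge> 0"
    and \<gamma>: "0 < \<gamma>" "\<gamma> < 1"
    and tail: "\<exists>L. slowly_varying L \<and>
                 (\<forall>t>0. measure M {x \<in> space M. X 1 x > t} = L t * t powr (-\<gamma>))"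
  shows "\<forall>p. 0 < p \<and> p < 1 \<longrightarrow> (\<forall>\<epsilon>>0. \<exists>C>0. \<forall>n::nat. n \<ge> 1 \<longrightarrow>
           prob_space.expectation M
             (\<lambda>x. (\<Sum>j=1..n. min (X j x / real n powr (1/\<gamma>)) (real n powr (-p/\<gamma>)))\<^sup>2)
           \<le> C * real n powr (-p * (1/\<gamma> - 1) + \<epsilon>))"
proof -
  interpret prob_space M by fact
  note rv[measurable]
  show ?thesis
  proof (intro allI impI)
    fix p \<epsilon> :: real assume p: "0 < p \<and> p < 1" and \<epsilon>: "\<epsilon> > 0"
    obtain L where L: "slowly_varying L" and tl: "\<forall>t>0. prob {x \<in> space M. X 1 x > t} = L t * t powr (-\<gamma>)"
      using tail by auto
    define \<beta> where "\<beta> = max (\<gamma>/2) (\<gamma> - \<gamma>*\<epsilon>/2)"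
    have ge: "\<gamma>*\<epsilon>/2 > 0" using \<gamma> \<epsilon> by simp
    have \<beta>0: "0 < \<beta>" and \<beta>\<gamma>: "\<beta> < \<gamma>"
      unfolding \<beta>_def using \<gamma> ge by (auto simp: max_def simp del: divide_pos_pos zero_less_mult_iff zero_less_divide_iff)
    have \<beta>1: "\<beta> < 1" using \<beta>\<gamma> \<gamma> by simp
    have \<beta>e: "\<gamma> - \<gamma>*\<epsilon>/2 \<le> \<beta>" unfolding \<beta>_def by simp
    obtain K where K: "\<forall>t>0. prob {x\<in>space M. X 1 x > t} \<le> K * t powr (-\<beta>)"
      using potter_tail[OF rv[of 1] L tl \<beta>0 \<beta>\<gamma>] by auto
    have K0: "K \<ge> 0" using K[rule_format, of 1] by (metis measure_nonneg order_trans powr_one_eq_one mult.right_neutral zero_less_one)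
    define q where "q = 2 powr (\<beta>-1)"
    have q1: "q < 1" unfolding q_def using \<beta>0 \<beta>1 by (auto intro: powr_less_one)
    define K' where "K' = K * 2 powr \<beta> / (1 - q)"
    have K'0: "K' \<ge> 0" unfolding K'_def using K0 q1 by auto
    define T where "T = -p * (1/\<gamma> - 1)"
    define e where "e = 1 - p/\<gamma>*(1-\<beta>) - \<beta>/\<gamma>"
    have eT: "e - T = (1-p)*(1-\<beta>/\<gamma>)" unfolding e_def T_def using \<gamma> by (simp add: field_simps)
    have T0: "T < 0" unfolding T_def using p \<gamma> by (simp add: field_simps)
    have "(1-p)*(1-\<beta>/\<gamma>) \<le> 1*(1-\<beta>/\<gamma>)" using p \<beta>\<gamma> \<gamma> by (intro mult_right_mono) (auto simp: field_simps)
    also have "1-\<beta>/\<gamma> \<le> \<epsilon>/2" using \<beta>e \<gamma> by (simp add: field_simps)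
    finally have eT2: "e - T \<le> \<epsilon>/2" using eT by simp
    have e1: "e \<le> T + \<epsilon>" using eT2 \<epsilon> by simp
    have e2: "2*e \<le> T + \<epsilon>" using eT2 T0 by simp
    show "\<exists>C>0. \<forall>n::nat. n \<ge> 1 \<longrightarrow>
           expectation (\<lambda>x. (\<Sum>j=1..n. min (X j x / real n powr (1/\<gamma>)) (real n powr (-p/\<gamma>)))\<^sup>2)
           \<le> C * real n powr (-p * (1/\<gamma> - 1) + \<epsilon>)"
    proof (intro exI[of _ "K' + K'^2 + 1"] conjI allI impI)
      show "K' + K'^2 + 1 > 0" using K'0 by (simp add: add_nonneg_pos)
      fix n :: nat assume n1: "n \<ge> 1"
      define b where "b = real n powr (1/\<gamma>)"
      define a where "a = real n powr (-p/\<gamma>)"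
      have b0: "b > 0" and a0: "a > 0" unfolding a_def b_def using n1 by auto
      have a1: "a \<le> 1" unfolding a_def using powr_mono[of "-p/\<gamma>" 0 "real n"] n1 p \<gamma> by simp
      define Y where "Y j x = min (X j x / b) a" for j x
      have Ym[measurable]: "Y j \<in> borel_measurable M" for j unfolding Y_def by measurable
      have Y0: "0 \<le> Y j x" if "x\<in>space M" for j x unfolding Y_def using nonneg[OF that] b0 a0 by auto
      have Ya: "Y j x \<le> a" for j x unfolding Y_def by simp
      have Yint: "integrable M (Y j)" for j
      proof (rule integrable_const_bound[where B=a])
        show "AE x in M. norm (Y j x) \<le> a"
        proof (rule AE_I2)
          fix x assume x: "x \<in> space M"
          show "norm (Y j x) \<le> a" using Y0[OF x, of j] Ya[of j x] by simp
        qed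
      qed simp
      define m where "m = expectation (Y 1)"
      have Yeq: "expectation (Y j) = m" for j
      proof -
        have "expectation (Y j) = integral\<^sup>L (distr M borel (X j)) (\<lambda>y. min (y/b) a)"
          unfolding Y_def by (subst integral_distr) auto
        also have "\<dots> = integral\<^sup>L (distr M borel (X 1)) (\<lambda>y. min (y/b) a)"
          by (subst ident[of j]) (rule refl)
        also have "\<dots> = m" unfolding m_def Y_def by (subst integral_distr) auto
        finally show ?thesis .
      qed
      have mbound: "m \<le> K' * (a powr (1-\<beta>) * b powr (-\<beta>))"
      proof -
        have tlZ: "prob {x\<in>space M. X 1 x / b > t} \<le> (K * b powr (-\<beta>)) * t powr (-\<beta>)" if t: "t>0" for t
        proof -
          have "{x\<in>space M. X 1 x / b > t} = {x\<in>space M. X 1 x > b*t}" using b0 by (auto simp: field_simps)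
          then have "prob {x\<in>space M. X 1 x / b > t} \<le> K * (b*t) powr (-\<beta>)"
            using K b0 t by simp
          also have "\<dots> = (K * b powr (-\<beta>)) * t powr (-\<beta>)" using b0 t by (simp add: powr_mult)
          finally show ?thesis .
        qed
        have "m \<le> (K * b powr (-\<beta>)) * 2 powr \<beta> / (1 - 2 powr (\<beta>-1)) * a powr (1-\<beta>)"
          unfolding m_def Y_def by (rule min_mean_bound[OF _ _ tlZ \<beta>0 \<beta>1 a0]) (use nonneg b0 in auto)
        then show ?thesis by (simp add: K'_def q_def algebra_simps)
      qed
      have m0: "m \<ge> 0" unfolding m_def by (rule Bochner_Integration.integral_nonneg) (rule Y0)
      have intprod: "integrable M (\<lambda>x. Y i x * Y j x)" for i j
      proof (rule integrable_const_bound[where B="a*a"])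
        show "AE x in M. norm (Y i x * Y j x) \<le> a*a"
        proof (rule AE_I2)
          fix x assume x: "x \<in> space M"
          show "norm (Y i x * Y j x) \<le> a*a"
            using Y0[OF x, of i] Y0[OF x, of j] Ya[of i x] Ya[of j x]
            by (simp add: abs_mult mult_mono)
        qed
      qed simp
      have diag: "expectation (\<lambda>x. Y i x * Y i x) \<le> a*m" for i
      proof -
        have "expectation (\<lambda>x. Y i x * Y i x) \<le> expectation (\<lambda>x. a * Y i x)"
        proof (rule integral_mono)
          fix x assume x: "x \<in> space M"
          show "Y i x * Y i x \<le> a * Y i x" using Y0[OF x, of i] Ya[of i x] by (intro mult_right_mono)
        qed (use intprod Yint in auto)
        also have "\<dots> = a*m" using Yeq[of i] by simp
        finally show ?thesis .
      qed
      have offdiag: "expectation (\<lambda>x. Y i x * Y j x) = m*m" if ij: "i \<noteq> j" for i j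
      proof -
        have "indep_vars (\<lambda>_. borel) (\<lambda>k x. (\<lambda>y. min (y/b) a) (X k x)) UNIV"
          by (rule indep_vars_compose2[OF indep]) auto
        then have "indep_vars (\<lambda>_. borel) Y UNIV" unfolding Y_def[abs_def] .
        then have ind: "indep_vars (\<lambda>_. borel) Y {i,j}" by (rule indep_vars_subset) auto
        have "expectation (\<lambda>x. \<Prod>k\<in>{i,j}. Y k x) = (\<Prod>k\<in>{i,j}. expectation (Y k))"
          by (rule indep_vars_lebesgue_integral[OF _ ind]) (auto intro: Yint)
        then show ?thesis using ij by (simp add: Yeq)
      qed
      have sq: "(\<Sum>j=1..n. Y j x)^2 = (\<Sum>i=1..n. \<Sum>j=1..n. Y i x * Y j x)" for x
        by (simp add: power2_eq_square sum_product)
      have "expectation (\<lambda>x. (\<Sum>j=1..n. min (X j x / real n powr (1/\<gamma>)) (real n powr (-p/\<gamma>)))\<^sup>2)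
          = expectation (\<lambda>x. \<Sum>i=1..n. \<Sum>j=1..n. Y i x * Y j x)"
        unfolding sq[symmetric] by (simp only: Y_def a_def b_def)
      also have "\<dots> = (\<Sum>i=1..n. \<Sum>j=1..n. expectation (\<lambda>x. Y i x * Y j x))"
        by (simp add: Bochner_Integration.integral_sum intprod Bochner_Integration.integrable_sum)
      also have "\<dots> \<le> (\<Sum>i=1..n. \<Sum>j=1..n. (if i = j then a*m else 0) + m*m)"
      proof (intro sum_mono)
        fix i j :: nat
        show "expectation (\<lambda>x. Y i x * Y j x) \<le> (if i = j then a*m else 0) + m*m"
        proof (cases "i = j")
          case True
          have "0 \<le> m*m" by simp
          then show ?thesis using diag[of i] True by (simp del: zero_le_mult_iff mult_nonneg_nonneg zero_le_square)
        qed (use offdiag[of i j] in simp)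
      qed
      also have "\<dots> = real n * (a*m) + real n * real n * (m*m)"
      proof -
        have "(\<Sum>j=1..n. (if i = j then a*m else 0)) = a*m" if "i \<in> {1..n}" for i
          using that by (simp add: sum.delta)
        then show ?thesis by (simp add: sum.distrib algebra_simps)
      qed
      finally have E: "expectation (\<lambda>x. (\<Sum>j=1..n. min (X j x / real n powr (1/\<gamma>)) (real n powr (-p/\<gamma>)))\<^sup>2)
          \<le> a * (real n * m) + (real n * m)^2" by (simp add: algebra_simps power2_eq_square)
      have npos: "real n > 0" using n1 by simp
      have ne: "real n * (a powr (1-\<beta>) * b powr (-\<beta>)) = real n powr e"
      proof -
        have "real n * (a powr (1-\<beta>) * b powr (-\<beta>)) = real n powr 1 * (real n powr (-p/\<gamma>*(1-\<beta>)) * real n powr (1/\<gamma>*(-\<beta>)))"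
          unfolding a_def b_def using npos by (simp add: powr_powr)
        also have "\<dots> = real n powr (1 + (-p/\<gamma>*(1-\<beta>)) + 1/\<gamma>*(-\<beta>))" by (simp only: powr_add mult.assoc)
        also have "1 + (-p/\<gamma>*(1-\<beta>)) + 1/\<gamma>*(-\<beta>) = e" unfolding e_def by (simp add: field_simps)
        finally show ?thesis .
      qed
      have nm: "real n * m \<le> K' * real n powr e"
      proof -
        have "real n * m \<le> real n * (K' * (a powr (1-\<beta>) * b powr (-\<beta>)))"
          using mbound npos by (intro mult_left_mono) auto
        also have "\<dots> = K' * real n powr e" using ne by (simp add: algebra_simps)
        finally show ?thesis .
      qed
      have nm0: "real n * m \<ge> 0" using m0 by simp
      have pe: "real n powr e \<le> real n powr (T + \<epsilon>)" using e1 n1 by (intro powr_mono) auto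
      have pe2: "real n powr e * real n powr e \<le> real n powr (T + \<epsilon>)"
        using e2 n1 by (simp add: powr_add[symmetric] powr_mono)
      have "a * (real n * m) + (real n * m)^2 \<le> 1 * (real n * m) + (real n * m)^2"
        using a1 nm0 by (intro add_right_mono mult_right_mono) auto
      also have "\<dots> \<le> K' * real n powr e + (K' * real n powr e)^2"
        using nm nm0 by (intro add_mono power_mono) auto
      also have "\<dots> = K' * real n powr e + K'^2 * (real n powr e * real n powr e)"
        by (simp add: power2_eq_square algebra_simps)
      also have "\<dots> \<le> K' * real n powr (T + \<epsilon>) + K'^2 * real n powr (T + \<epsilon>)"
        using pe pe2 K'0 by (intro add_mono mult_left_mono) auto
      also have "\<dots> \<le> (K' + K'^2 + 1) * real n powr (T + \<epsilon>)" by (simp add: algebra_simps)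
      finally show "expectation (\<lambda>x. (\<Sum>j=1..n. min (X j x / real n powr (1/\<gamma>)) (real n powr (-p/\<gamma>)))\<^sup>2)
           \<le> (K' + K'^2 + 1) * real n powr (-p * (1/\<gamma> - 1) + \<epsilon>)"
        using E unfolding T_def by linarith
    qed
  qed
qed
end
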